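(* Let $P$ be a finite poset and $\mathcal{F}\subseteq\mathrm{Hom}(P,\mathbb{N})$ a poset filter. The family of ascents $\{\Lambda\phi:\phi\in\mathcal{F}\}$ has a finite set of inclusion-minimal elements.
   Context: $\mathbb{N}=\{0,1,2,\dots\}$; $\mathrm{Hom}(P,\mathbb{N})$ is the set of isotone maps $P\to\mathbb{N}$ ordered pointwise; a filter is an up-closed subset. The ascent of $\phi$ is $\Lambda\phi=\{(p,i)\in P\times\mathbb{N}:\phi(q)\le i<\phi(p)\text{ for all }q<p\}$. *)

theory Defs
  imports Main
begin

definition Hom :: "('a::order \<Rightarrow> nat) set" where
  "Hom = {\<phi>. mono \<phi>}"

definition hom_filter :: "('a::order \<Rightarrow> nat) set \<Rightarrow> bool" where
  "hom_filter F \<longleftrightarrow> F \<subseteq> Hom \<and> (\<forall>\<phi>\<in>F. \<forall>\<psi>\<in>Hom. \<phi> \<le> \<psi> \<longrightarrow> \<psi> \<in> F)"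

definition ascent :: "('a::order \<Rightarrow> nat) \<Rightarrow> ('a \<times> nat) set" where
  "ascent \<phi> = {(p, i). i < \<phi> p \<and> (\<forall>q. q < p \<longrightarrow> \<phi> q \<le> i)}"

definition min_elems :: "'b set set \<Rightarrow> 'b set set" where
  "min_elems S = {A \<in> S. \<not> (\<exists>B\<in>S. B \<subset> A)}"

end

theory Submission
  imports Defs
begin

lemma basis:
  "finite D \<Longrightarrow> \<exists>G. finite G \<and> G \<subseteq> F \<and> (\<forall>\<phi>\<in>F. \<exists>\<gamma>\<in>G. \<forall>x\<in>D. \<gamma> x \<le> (\<phi> x::nat))"
proof (induction D arbitrary: F rule: finite_induct)
  case empty
  show ?case
  proof (cases "F = {}")
    case False
    then obtain f where "f \<in> F" by blast
    then show ?thesis by (intro exI[of _ "{f}"]) auto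
  qed auto
next
  case (insert a D)
  obtain G0 where G0: "finite G0" "G0 \<subseteq> F" "\<forall>\<phi>\<in>F. \<exists>\<gamma>\<in>G0. \<forall>x\<in>D. \<gamma> x \<le> \<phi> x"
    using insert.IH[of F] by blast
  have "\<forall>j. \<exists>G. finite G \<and> G \<subseteq> {\<phi>\<in>F. \<phi> a = j} \<and>
     (\<forall>\<phi>\<in>{\<phi>\<in>F. \<phi> a = j}. \<exists>\<gamma>\<in>G. \<forall>x\<in>D. \<gamma> x \<le> \<phi> x)"
    by (intro allI insert.IH)
  then obtain Gf where Gf0: "\<forall>j. finite (Gf j) \<and> Gf j \<subseteq> {\<phi>\<in>F. \<phi> a = j} \<and>
     (\<forall>\<phi>\<in>{\<phi>\<in>F. \<phi> a = j}. \<exists>\<gamma>\<in>Gf j. \<forall>x\<in>D. \<gamma> x \<le> \<phi> x)"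
    by (rule choice[THEN exE]) blast
  note Gf = Gf0[rule_format]
  define k where "k = Max (insert 0 ((\<lambda>\<gamma>. \<gamma> a) ` G0))"
  have k: "\<And>\<gamma>. \<gamma> \<in> G0 \<Longrightarrow> \<gamma> a \<le> k"
    unfolding k_def using G0(1) by (intro Max_ge) auto
  define G where "G = G0 \<union> (\<Union>j\<le>k. Gf j)"
  have "finite G" unfolding G_def using G0(1) Gf by auto
  moreover have "G \<subseteq> F" unfolding G_def using G0(2) Gf by blast
  moreover have "\<forall>\<phi>\<in>F. \<exists>\<gamma>\<in>G. \<forall>x\<in>insert a D. \<gamma> x \<le> \<phi> x"
  proof
    fix \<phi> assume \<phi>: "\<phi> \<in> F"
    show "\<exists>\<gamma>\<in>G. \<forall>x\<in>insert a D. \<gamma> x \<le> \<phi> x"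
    proof (cases "k \<le> \<phi> a")
      case True
      then obtain \<gamma> where "\<gamma> \<in> G0" "\<forall>x\<in>D. \<gamma> x \<le> \<phi> x" using G0(3) \<phi> by blast
      moreover have "\<gamma> a \<le> \<phi> a" using k[of \<gamma>] True \<open>\<gamma> \<in> G0\<close> by simp
      moreover have "\<gamma> \<in> G" unfolding G_def using \<open>\<gamma> \<in> G0\<close> by simp
      ultimately show ?thesis by auto
    next
      case False
      have "\<phi> \<in> {\<phi>\<in>F. \<phi> a = \<phi> a}" using \<phi> by simp
      then obtain \<gamma> where g: "\<gamma> \<in> Gf (\<phi> a)" "\<forall>x\<in>D. \<gamma> x \<le> \<phi> x" using Gf[of "\<phi> a"] by blast
      have "\<gamma> a = \<phi> a" using g(1) Gf[of "\<phi> a"] by blast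
      moreover have "\<gamma> \<in> G" unfolding G_def using g(1) False by auto
      ultimately show ?thesis using g(2) by (intro bexI[of _ \<gamma>]) auto
    qed
  qed
  ultimately show ?case by blast
qed

theorem lemma1p5:
  fixes F :: "('a::{order,finite} \<Rightarrow> nat) set"
  assumes "hom_filter F"
  shows "finite (min_elems (ascent ` F))"
proof -
  obtain G where G: "finite G" "G \<subseteq> F" "\<forall>\<phi>\<in>F. \<exists>\<gamma>\<in>G. \<forall>x\<in>(UNIV::'a set). \<gamma> x \<le> \<phi> x"
    using basis[of "UNIV::'a set" F] by auto
  define C where "C = Max (insert 0 ((\<lambda>(\<gamma>,x). \<gamma> x) ` (G \<times> (UNIV::'a set))))"
  have C: "\<And>\<gamma> x. \<gamma> \<in> G \<Longrightarrow> \<gamma> x \<le> C"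
    unfolding C_def using G(1) by (intro Max_ge) force+
  define B where "B = {f::'a \<Rightarrow> nat. \<forall>x. (x \<in> UNIV \<longrightarrow> f x \<in> {..C}) \<and> (x \<notin> UNIV \<longrightarrow> f x = 0)}"
  have fB: "finite B" unfolding B_def by (rule finite_set_of_finite_funs) auto
  have "min_elems (ascent ` F) \<subseteq> ascent ` B"
  proof
    fix A assume A: "A \<in> min_elems (ascent ` F)"
    then obtain \<phi> where \<phi>: "\<phi> \<in> F" "A = ascent \<phi>" unfolding min_elems_def by auto
    define \<psi> where "\<psi> = (\<lambda>x. min (\<phi> x) C)"
    have "\<phi> \<in> Hom" using \<phi>(1) assms unfolding hom_filter_def by blast
    hence "mono \<psi>" unfolding Hom_def \<psi>_def mono_def by (auto simp: min.coboundedI1)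
    hence hp: "\<psi> \<in> Hom" unfolding Hom_def by simp
    obtain \<gamma> where g: "\<gamma> \<in> G" "\<forall>x. \<gamma> x \<le> \<phi> x" using G(3) \<phi>(1) by blast
    have "\<gamma> \<le> \<psi>" unfolding \<psi>_def le_fun_def using g C by auto
    moreover have "\<gamma> \<in> F" using g G by blast
    ultimately have pF: "\<psi> \<in> F" using assms hp unfolding hom_filter_def by blast
    have sub: "ascent \<psi> \<subseteq> ascent \<phi>"
    proof
      fix z assume "z \<in> ascent \<psi>"
      then obtain p i where z: "z = (p, i)" "i < \<psi> p" "\<forall>q. q < p \<longrightarrow> \<psi> q \<le> i"
        unfolding ascent_def by blast
      have "i < \<phi> p" "i < C" using z(2) unfolding \<psi>_def by auto
      moreover have "\<forall>q. q < p \<longrightarrow> \<phi> q \<le> i"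
      proof (intro allI impI)
        fix q assume "q < p"
        hence "min (\<phi> q) C \<le> i" using z(3) unfolding \<psi>_def by blast
        thus "\<phi> q \<le> i" using \<open>i < C\<close> by linarith
      qed
      ultimately show "z \<in> ascent \<phi>" unfolding ascent_def z(1) by blast
    qed
    have "\<not> ascent \<psi> \<subset> A" using A pF unfolding min_elems_def by blast
    hence "A = ascent \<psi>" using sub \<phi>(2) by blast
    moreover have "\<psi> \<in> B" unfolding B_def \<psi>_def by auto
    ultimately show "A \<in> ascent ` B" by blast
  qed
  thus ?thesis using fB finite_subset by blast
qed

end
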